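(* Let $A$ be a commutative ring, let $a_1,\ldots,a_n\in A$, let $u\in A^\times$, $b\in A$, and let $\beta:=h(u)y(ub)\in C(A)$. Then there exist unique $b_1,\ldots,b_n\in A$ satisfying \[\epsilon(b_i)\cdots\epsilon(b_1)=h(u)^{(-1)^{i-1}}\epsilon(a_i)\cdots\epsilon(a_1)\beta\quad\text{in }C(A)\text{ for all }1\le i\le n.\] Furthermore, $b_1=a_1u^2+bu$ and $b_i=u^{2(-1)^{i-1}}a_i$ for all $i\ge2$.
   Context: $C(A)$ is the group with generators $\epsilon(a)$, $a\in A$, and relations: with $h(u):=\epsilon(-u)\epsilon(-u^{-1})\epsilon(-u)$ for $u\in A^\times$, (1) $h(u)h(v)=h(uv)$; (2) $\epsilon(a)\epsilon(0)\epsilon(b)=h(-1)\epsilon(a+b)$; (3) $h(u)\epsilon(a)h(u)=\epsilon(u^2a)$. For $a\in A$, $y(a):=\epsilon(0)^3\epsilon(a)$. *)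

theory Defs
  imports Main
begin

text \<open>The group C(A) is presented by generators eps(a), a in A, and relations.
 We model it by words over generators and their inverses: a letter (a, True)
 stands for eps(a), a letter (a, False) for eps(a)^-1; the group product is
 concatenation, and equality in C(A) is the congruence ceq generated by free
 cancellation and the defining relations (1)-(3).\<close>

type_synonym 'a cword = "('a \<times> bool) list"

definition gen :: "'a \<Rightarrow> 'a cword" where
  "gen a = [(a, True)]"

definition winv :: "'a cword \<Rightarrow> 'a cword" where
  "winv w = rev (map (\<lambda>(a, s). (a, \<not> s)) w)"

definition uinv :: "'a::comm_ring_1 \<Rightarrow> 'a" where
  "uinv u = (SOME v. u * v = 1)"

definition hw :: "'a::comm_ring_1 \<Rightarrow> 'a cword" where
  "hw u = gen (- u) @ gen (- uinv u) @ gen (- u)"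

definition yw :: "'a::comm_ring_1 \<Rightarrow> 'a cword" where
  "yw a = gen 0 @ gen 0 @ gen 0 @ gen a"

inductive ceq :: "'a::comm_ring_1 cword \<Rightarrow> 'a cword \<Rightarrow> bool" where
  refl: "ceq w w"
| sym: "ceq v w \<Longrightarrow> ceq w v"
| trans: "ceq u v \<Longrightarrow> ceq v w \<Longrightarrow> ceq u w"
| cong: "ceq v w \<Longrightarrow> ceq (p @ v @ q) (p @ w @ q)"
| cancel: "ceq [(a, s), (a, \<not> s)] []"
| rel1: "u dvd 1 \<Longrightarrow> v dvd 1 \<Longrightarrow> ceq (hw u @ hw v) (hw (u * v))"
| rel2: "ceq (gen a @ gen 0 @ gen b) (hw (-1) @ gen (a + b))"
| rel3: "u dvd 1 \<Longrightarrow> ceq (hw u @ gen a @ hw u) (gen (u\<^sup>2 * a))"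

definition eprod :: "'a list \<Rightarrow> nat \<Rightarrow> 'a cword" where
  "eprod xs i = concat (rev (map gen (take i xs)))"

definition hpow :: "'a::comm_ring_1 \<Rightarrow> nat \<Rightarrow> 'a cword" where
  "hpow u i = (if odd i then hw u else winv (hw u))"

end

theory Submission
  imports Defs
begin

lemma uinv_mult: "(u::'a::comm_ring_1) dvd 1 \<Longrightarrow> u * uinv u = 1"
  unfolding uinv_def by (metis (mono_tags, lifting) dvdE someI_ex)

lemma uinv_unique: "(u::'a::comm_ring_1) * x = 1 \<Longrightarrow> uinv u = x"
proof -
  assume h: "u * x = 1"
  then have "u dvd 1" by (metis dvdI)
  then have "u * uinv u = 1" by (rule uinv_mult)
  then have "x * (u * uinv u) = x" by simp
  then show ?thesis using h by (simp add: mult.assoc[symmetric] mult.commute)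
qed

lemma uinv_dvd: "(u::'a::comm_ring_1) dvd 1 \<Longrightarrow> uinv u dvd 1"
  using uinv_mult by (metis dvdI mult.commute)

lemma ctx: "ceq v w \<Longrightarrow> X = p @ v @ q \<Longrightarrow> Y = p @ w @ q \<Longrightarrow> ceq X Y"
  using ceq.cong by blast

lemma capp: "ceq v w \<Longrightarrow> ceq v' w' \<Longrightarrow> ceq (v @ v') (w @ w')"
  by (metis ceq.cong ceq.trans append.left_neutral append_Nil2)

lemma capp_l: "ceq v w \<Longrightarrow> ceq (p @ v) (p @ w)"
  by (rule capp[OF ceq.refl])

lemma capp_r: "ceq v w \<Longrightarrow> ceq (v @ q) (w @ q)"
  by (rule capp[OF _ ceq.refl])

lemma winv_Cons: "winv (l # w) = winv w @ [(fst l, \<not> snd l)]"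
  by (cases l) (simp add: winv_def)

lemma winv_Nil: "winv [] = []" by (simp add: winv_def)

lemma winv_winv: "winv (winv w) = w"
  unfolding winv_def by (induction w) auto

lemma inv_r: "ceq (w @ winv w) []"
proof (induction w)
  case Nil then show ?case by (simp add: winv_Nil ceq.refl)
next
  case (Cons l w)
  obtain a s where l: "l = (a, s)" by (cases l)
  have "ceq ([l] @ (w @ winv w) @ [(a, \<not> s)]) ([l] @ [] @ [(a, \<not> s)])"
    using Cons ceq.cong by blast
  moreover have "ceq ([l] @ [] @ [(a, \<not> s)]) []" using ceq.cancel l by simp
  ultimately show ?case using l by (simp add: winv_Cons) (metis ceq.trans append.assoc append_Cons append_Nil)
qed

lemma inv_l: "ceq (winv w @ w) []"
  using inv_r[of "winv w"] by (simp add: winv_winv)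

lemma h1: "ceq (hw (1::'a::comm_ring_1)) []"
proof -
  have r: "ceq (hw 1 @ hw (1::'a)) (hw 1)" using ceq.rel1[of 1 1] by simp
  have "ceq (hw 1 @ hw 1 @ winv (hw (1::'a))) (hw 1 @ winv (hw 1))"
    using capp_r[OF r, of "winv (hw 1)"] by simp
  moreover have "ceq (hw 1 @ hw 1 @ winv (hw (1::'a))) (hw 1)"
    using capp_l[OF inv_r, of "hw 1" "hw 1"] by simp
  ultimately show ?thesis using inv_r ceq.trans ceq.sym by metis
qed

lemma hm1: "ceq (hw (-1::'a::comm_ring_1) @ hw (-1)) []"
  using ceq.rel1[of "-1::'a" "-1"] h1 ceq.trans by fastforce

subsection \<open>Matrix model\<close>

definition mm :: "'a::comm_ring_1 \<times> 'a \<times> 'a \<times> 'a \<Rightarrow> 'a \<times> 'a \<times> 'a \<times> 'a \<Rightarrow> 'a \<times> 'a \<times> 'a \<times> 'a" where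
  "mm x y = (fst x * fst y + fst (snd x) * fst (snd (snd y)),
             fst x * fst (snd y) + fst (snd x) * snd (snd (snd y)),
             fst (snd (snd x)) * fst y + snd (snd (snd x)) * fst (snd (snd y)),
             fst (snd (snd x)) * fst (snd y) + snd (snd (snd x)) * snd (snd (snd y)))"

lemma mm_simp [simp]: "mm (a, b, c, d) (e, f, g, h) = (a*e+b*g, a*f+b*h, c*e+d*g, c*f+d*h)"
  by (simp add: mm_def)

definition ml :: "'a::comm_ring_1 \<times> bool \<Rightarrow> 'a \<times> 'a \<times> 'a \<times> 'a" where
  "ml l = (if snd l then (fst l, 1, -1, 0) else (0, -1, 1, fst l))"

lemma ml_simp [simp]: "ml (a, True) = (a, 1, -1, 0)" "ml (a, False) = (0, -1, 1, a)"
  by (simp_all add: ml_def)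

primrec mw :: "'a::comm_ring_1 cword \<Rightarrow> 'a \<times> 'a \<times> 'a \<times> 'a" where
  "mw [] = (1, 0, 0, 1)"
| "mw (l # w) = mm (ml l) (mw w)"

lemma mm_assoc: "mm (mm x y) z = mm x (mm y z)"
  by (cases x; cases y; cases z) (simp add: algebra_simps)

lemma mm_id: "mm x (1,0,0,1) = x"
  by (cases x) simp

lemma mm_idl: "mm (1,0,0,1) x = x"
  by (cases x) simp

lemma mw_append: "mw (v @ w) = mm (mw v) (mw w)"
  by (induction v) (simp_all add: mm_assoc mm_idl)

lemma mw_hw: assumes "(u::'a::comm_ring_1) dvd 1" shows "mw (hw u) = (u, 0, 0, uinv u)"
proof -
  obtain v where v: "uinv u = v" by blast
  have uv: "u * v = 1" using uinv_mult[OF assms] v by simp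
  have "mw (hw u) = mm (-u, 1, -1, 0) (mm (-v, 1, -1, 0) (-u, 1, -1, 0))"
    by (simp add: hw_def gen_def v mm_id)
  also have "\<dots> = (u, 0, 0, v)"
    by (simp add: algebra_simps uv)
  finally show ?thesis using v by simp
qed

lemma mw_gen: "mw (gen a) = (a, 1, -1, 0)"
  by (simp add: gen_def mm_id)

lemma sound_rel2: "mw (gen a @ gen 0 @ gen b) = mw (hw (-1::'a::comm_ring_1) @ gen (a + b))"
proof -
  have u: "uinv (-1::'a) = -1" by (rule uinv_unique) simp
  have "mw (hw (-1::'a)) = (-1, 0, 0, -1)" using mw_hw[of "-1::'a"] u by simp
  then have r: "mw (hw (-1::'a) @ gen (a + b)) = (-(a+b), -1, 1, 0)"
    by (simp add: mw_append mw_gen)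
  have l: "mw (gen a @ gen 0 @ gen b) = mm (a, 1, -1, 0) (mm (0, 1, -1, 0) (b, 1, -1, 0))"
    by (simp only: mw_append mw_gen)
  also have "\<dots> = (-(a+b), -1, 1, 0)" by (simp add: algebra_simps)
  finally show ?thesis using r by simp
qed

lemma sound_rel3: assumes u: "(u::'a::comm_ring_1) dvd 1"
  shows "mw (hw u @ gen a @ hw u) = mw (gen (u\<^sup>2 * a))"
proof -
  obtain v where v: "uinv u = v" by blast
  have uv: "u * v = 1" using uinv_mult[OF u] v by simp
  have "mw (hw u @ gen a @ hw u) = mm (u, 0, 0, v) (mm (a, 1, -1, 0) (u, 0, 0, v))"
    by (simp only: mw_append mw_gen mw_hw[OF u] v)
  also have "\<dots> = (u * a * u, u * v, - (v * u), 0)" by simp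
  also have "\<dots> = (u\<^sup>2 * a, 1, -1, 0)" using uv by (simp add: power2_eq_square mult.commute mult.left_commute)
  finally show ?thesis by (simp add: mw_gen)
qed

lemma sound_rel1: assumes u: "(u::'a::comm_ring_1) dvd 1" and v: "v dvd 1"
  shows "mw (hw u @ hw v) = mw (hw (u * v))"
proof -
  have "u * v dvd 1" using u v by (metis mult_dvd_mono mult_1)
  moreover have "uinv (u * v) = uinv u * uinv v"
    by (rule uinv_unique) (metis uinv_mult u v mult.assoc mult.left_commute mult_1_right)
  ultimately show ?thesis using u v by (simp add: mw_append mw_hw)
qed

lemma mw_sound: "ceq v w \<Longrightarrow> mw v = mw w"
proof (induction rule: ceq.induct)
  case (cong v w p q) then show ?case by (simp add: mw_append)
next
  case (cancel a s) then show ?case by (cases s) simp_all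
next
  case (rel1 u v) then show ?case by (rule sound_rel1)
next
  case (rel2 a b) then show ?case by (rule sound_rel2)
next
  case (rel3 u a) then show ?case by (rule sound_rel3)
qed auto

lemma eprod_Suc: "i < length xs \<Longrightarrow> eprod xs (Suc i) = gen (xs ! i) @ eprod xs i"
  by (simp add: eprod_def take_Suc_conv_app_nth)

lemma eprod_take: "take i xs = take i ys \<Longrightarrow> eprod xs i = eprod ys i"
  by (simp add: eprod_def)

lemma first_step:
  assumes u: "(u::'a::comm_ring_1) dvd 1"
  shows "ceq (gen (a * u\<^sup>2 + b * u)) (hw u @ gen a @ hw u @ yw (u * b))"
proof -
  have s1: "ceq (hw u @ gen a @ hw u @ yw (u * b)) (gen (u\<^sup>2 * a) @ gen 0 @ gen 0 @ gen 0 @ gen (u * b))"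
    by (rule ctx[OF ceq.rel3[OF u], where p = "[]"]) (simp_all add: yw_def)
  have s2: "ceq (gen (u\<^sup>2 * a) @ gen 0 @ gen 0 @ gen 0 @ gen (u * b)) (hw (-1) @ gen (u\<^sup>2 * a) @ gen 0 @ gen (u * b))"
    by (rule ctx[OF ceq.rel2[of "u\<^sup>2 * a" 0], where p = "[]"]) simp_all
  have s3: "ceq (hw (-1) @ gen (u\<^sup>2 * a) @ gen 0 @ gen (u * b)) (hw (-1) @ hw (-1) @ gen (u\<^sup>2 * a + u * b))"
    by (rule ctx[OF ceq.rel2[of "u\<^sup>2 * a"], where p = "hw (-1)" and q = "[]"]) simp_all
  have s4: "ceq (hw (-1) @ hw (-1) @ gen (u\<^sup>2 * a + u * b)) ([] @ gen (u\<^sup>2 * a + u * b))"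
    using capp_r[OF hm1] by simp
  have e: "u\<^sup>2 * a + u * b = a * u\<^sup>2 + b * u" by (simp add: algebra_simps)
  have "ceq (hw u @ gen a @ hw u @ yw (u * b)) (gen (u\<^sup>2 * a + u * b))"
    using ceq.trans[OF s1 ceq.trans[OF s2 ceq.trans[OF s3 s4]]] by simp
  then show ?thesis using e by (simp add: ceq.sym)
qed

lemma hconj:
  assumes u: "(u::'a::comm_ring_1) dvd 1"
  shows "ceq (hw u @ gen a @ hw u) (gen (u\<^sup>2 * a))"
  using ceq.rel3[OF u] .

lemma step:
  assumes u: "(u::'a::comm_ring_1) dvd 1" and i: "1 \<le> i"
  shows "ceq (gen ((if odd (i + 1) then u\<^sup>2 else (uinv u)\<^sup>2) * a) @ hpow u i)
             (hpow u (Suc i) @ gen a)"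
proof (cases "odd i")
  case True
  let ?h = "hw u" and ?v = "uinv u"
  have uv: "u\<^sup>2 * (?v\<^sup>2 * a) = a"
    using uinv_mult[OF u] by (metis mult.assoc power_mult_distrib power_one mult_1)
  have c1: "ceq (winv ?h @ ?h @ gen (?v\<^sup>2 * a) @ ?h) (winv ?h @ gen a)"
    using capp_l[OF hconj[OF u, of "?v\<^sup>2 * a"], of "winv ?h"] uv by simp
  have c2: "ceq (winv ?h @ ?h @ gen (?v\<^sup>2 * a) @ ?h) ([] @ gen (?v\<^sup>2 * a) @ ?h)"
    using capp_r[OF inv_l[of ?h], of "gen (?v\<^sup>2 * a) @ ?h"] by simp
  have "ceq (gen (?v\<^sup>2 * a) @ ?h) (winv ?h @ gen a)"
    using ceq.trans[OF ceq.sym[OF c2] c1] by simp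
  then show ?thesis using True by (simp add: hpow_def)
next
  case False
  let ?h = "hw u"
  have c1: "ceq (?h @ gen a @ ?h @ winv ?h) (gen (u\<^sup>2 * a) @ winv ?h)"
    using capp_r[OF hconj[OF u, of a], of "winv ?h"] by simp
  have c2: "ceq (?h @ gen a @ ?h @ winv ?h) (?h @ gen a @ [])"
    using capp_l[OF inv_r[of ?h], of "?h @ gen a"] by simp
  have "ceq (gen (u\<^sup>2 * a) @ winv ?h) (?h @ gen a)"
    using ceq.trans[OF ceq.sym[OF c1] c2] by simp
  then show ?thesis using False by (simp add: hpow_def)
qed

lemma uniq:
  fixes bs cs :: "'a::comm_ring_1 list"
  assumes l: "length bs = n" "length cs = n"
    and m: "\<forall>i. 1 \<le> i \<and> i \<le> n \<longrightarrow> mw (eprod bs i) = mw (eprod cs i)"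
  shows "bs = cs"
proof -
  have "i \<le> n \<Longrightarrow> take i bs = take i cs" for i
  proof (induction i)
    case 0 then show ?case by simp
  next
    case (Suc i)
    then have t: "take i bs = take i cs" by simp
    have il: "i < length bs" "i < length cs" using Suc l by auto
    let ?E = "eprod bs i"
    have ee: "eprod cs i = ?E" using eprod_take[OF t] by simp
    have "mw (eprod bs (Suc i)) = mw (eprod cs (Suc i))" using m Suc by simp
    then have "mm (ml (bs ! i, True)) (mw ?E) = mm (ml (cs ! i, True)) (mw ?E)"
      using il ee by (simp add: eprod_Suc mw_append gen_def)
    then have "mm (mm (ml (bs ! i, True)) (mw ?E)) (mw (winv ?E)) = mm (mm (ml (cs ! i, True)) (mw ?E)) (mw (winv ?E))"
      by simp
    moreover have "mw ?E \<noteq> undefined \<or> True" by simp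
    moreover have "mm (mw ?E) (mw (winv ?E)) = (1, 0, 0, 1)"
      using mw_sound[OF inv_r[of ?E]] by (simp add: mw_append)
    ultimately have "ml (bs ! i, True) = ml (cs ! i, True)"
      by (simp add: mm_assoc mm_id)
    then have "bs ! i = cs ! i" by simp
    then show ?case using t il by (simp add: take_Suc_conv_app_nth)
  qed
  then show ?thesis using l by (metis order_refl take_all)
qed


theorem proposition4p6:
  fixes as :: "'a::comm_ring_1 list" and u b :: 'a
  assumes "u dvd 1"
  defines "n \<equiv> length as"
  defines "\<beta> \<equiv> hw u @ yw (u * b)"
  defines "P \<equiv> (\<lambda>bs. length bs = n \<and>
             (\<forall>i. 1 \<le> i \<and> i \<le> n \<longrightarrow> ceq (eprod bs i) (hpow u i @ eprod as i @ \<beta>)))"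
  shows "(\<exists>!bs. P bs) \<and>
         (\<forall>bs. P bs \<longrightarrow>
            (1 \<le> n \<longrightarrow> bs ! 0 = (as ! 0) * u\<^sup>2 + b * u) \<and>
            (\<forall>i. 2 \<le> i \<and> i \<le> n \<longrightarrow>
               bs ! (i - 1) = (if odd i then u\<^sup>2 else (uinv u)\<^sup>2) * as ! (i - 1)))"
proof -
  define c where "c = (\<lambda>k. if k = 0 then as ! 0 * u\<^sup>2 + b * u
                    else (if odd (k + 1) then u\<^sup>2 else (uinv u)\<^sup>2) * as ! k)"
  define bs0 where "bs0 = map c [0..<n]"
  have len: "length bs0 = n" by (simp add: bs0_def)
  have nth0: "k < n \<Longrightarrow> bs0 ! k = c k" for k by (simp add: bs0_def)
  have main: "1 \<le> i \<and> i \<le> n \<longrightarrow> ceq (eprod bs0 i) (hpow u i @ eprod as i @ \<beta>)" for i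
  proof (induction i)
    case 0 then show ?case by simp
  next
    case (Suc i)
    show ?case
    proof
      assume a: "1 \<le> Suc i \<and> Suc i \<le> n"
      show "ceq (eprod bs0 (Suc i)) (hpow u (Suc i) @ eprod as (Suc i) @ \<beta>)"
      proof (cases "i = 0")
        case True
        have "eprod bs0 1 = gen (c 0)" using a True len nth0 eprod_Suc[of 0 bs0]
          by (simp add: eprod_def)
        moreover have "eprod as 1 = gen (as ! 0)" using a True eprod_Suc[of 0 as]
          by (cases as) (simp_all add: eprod_def n_def)
        ultimately show ?thesis using True first_step[OF assms(1), of "as ! 0" b]
          by (simp add: c_def hpow_def \<beta>_def)
      next
        case False
        have il: "i < length bs0" "i < length as" using a len n_def by auto
        have IH: "ceq (eprod bs0 i) (hpow u i @ eprod as i @ \<beta>)" using Suc a False by simp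
        have "ceq (eprod bs0 (Suc i)) (gen (c i) @ hpow u i @ eprod as i @ \<beta>)"
          using capp_l[OF IH, of "gen (c i)"] eprod_Suc[OF il(1)] nth0 a by simp
        moreover have "ceq (gen (c i) @ hpow u i @ eprod as i @ \<beta>) (hpow u (Suc i) @ gen (as ! i) @ eprod as i @ \<beta>)"
          using capp_r[OF step[OF assms(1), of i "as ! i"], of "eprod as i @ \<beta>"] False
          by (simp add: c_def)
        ultimately show ?thesis using eprod_Suc[OF il(2)] ceq.trans by fastforce
      qed
    qed
  qed
  have Pb: "P bs0" using len main by (simp add: P_def)
  have U: "P x \<Longrightarrow> x = bs0" for x
  proof -
    assume px: "P x"
    show ?thesis
    proof (rule uniq[of x n bs0])
      show "length x = n" using px by (simp add: P_def)
      show "length bs0 = n" by (rule len)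
      show "\<forall>i. 1 \<le> i \<and> i \<le> n \<longrightarrow> mw (eprod x i) = mw (eprod bs0 i)"
        using px Pb unfolding P_def by (metis mw_sound)
    qed
  qed
  have ex: "\<exists>!bs. P bs" using Pb U by blast
  have "P bs \<longrightarrow>
            (1 \<le> n \<longrightarrow> bs ! 0 = (as ! 0) * u\<^sup>2 + b * u) \<and>
            (\<forall>i. 2 \<le> i \<and> i \<le> n \<longrightarrow>
               bs ! (i - 1) = (if odd i then u\<^sup>2 else (uinv u)\<^sup>2) * as ! (i - 1))" for bs
  proof
    assume "P bs"
    then have e: "bs = bs0" by (rule U)
    show "(1 \<le> n \<longrightarrow> bs ! 0 = (as ! 0) * u\<^sup>2 + b * u) \<and>
            (\<forall>i. 2 \<le> i \<and> i \<le> n \<longrightarrow>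
               bs ! (i - 1) = (if odd i then u\<^sup>2 else (uinv u)\<^sup>2) * as ! (i - 1))"
    proof (intro conjI allI impI)
      assume "1 \<le> n" then show "bs ! 0 = (as ! 0) * u\<^sup>2 + b * u"
        using e nth0[of 0] by (simp add: c_def)
    next
      fix i assume i2: "2 \<le> i \<and> i \<le> n"
      then have "i - 1 < n" "i - 1 \<noteq> 0" "i - 1 + 1 = i" by auto
      then show "bs ! (i - 1) = (if odd i then u\<^sup>2 else (uinv u)\<^sup>2) * as ! (i - 1)"
        using e nth0[of "i - 1"] unfolding c_def by presburger
    qed
  qed
  then show ?thesis using ex by blast
qed

end
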